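(* Let $p$ be an odd prime and let $n,s$ be positive integers such that $2n/s\geq 3$ is an odd integer; put $q=p^n$, $d=p^s$. Fix $\mu\in\mathbb{F}_{q^2}\setminus\mathbb{F}_q$ such that $\mu^d=u_1+u_2\mu$ with $u_1,u_2\in\mathbb{F}_q$ and $u_2$ a $(d-1)$-th power in $\mathbb{F}_{q^2}$, and write $\mu^{d+1}=w_1+w_2\mu$ with $w_1,w_2\in\mathbb{F}_q$. Let \[ J=\{(a^d+a,\,x_1+x_2\mu): a,x_1\in\mathbb{F}_q,\ x_2\in\mathbb{F}_q^*\},\qquad K=\bigcup_{\beta\in\mathbb{F}_q}\phi_{(\beta\mu)^d+\beta\mu}(J). \] If $X=(\mathbb{F}_{q^2}\times\mathbb{F}_{q^2})\setminus K$, then \[ X=\{((a+\beta\mu)^d+(a+\beta\mu),\ t_1+(a^d\beta+a\beta^du_2+\beta^{d+1}w_2)\mu): a,\beta,t_1\in\mathbb{F}_q\}. \]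
   Context: The map $x\mapsto x^d+x$ is a bijection of $\mathbb{F}_{q^2}$. For $k=\alpha^d+\alpha\in\mathbb{F}_{q^2}$ ($\alpha\in\mathbb{F}_{q^2}$), $\phi_k:\mathbb{F}_{q^2}\times\mathbb{F}_{q^2}\to\mathbb{F}_{q^2}\times\mathbb{F}_{q^2}$ is the map $(a^d+a,x)\mapsto(a^d+a+k,\ x+a^d\alpha+a\alpha^d+\alpha^{d+1})$. $\mathbb{F}_q$ is the subfield of $\mathbb{F}_{q^2}$ of order $q$. *)

theory Defs
  imports Main "HOL-Computational_Algebra.Primes"
begin

definition Tmap :: "nat \<Rightarrow> 'a::field \<Rightarrow> 'a" where
  "Tmap d x = x ^ d + x"

definition subfield_q :: "nat \<Rightarrow> 'a::field set" where
  "subfield_q q = {x. x ^ q = x}"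

text \<open>phi_k (a^d+a, x) = (a^d+a+k, x + a^d alpha + a alpha^d + alpha^(d+1)), where k = alpha^d+alpha;
  a and alpha are recovered as preimages under the bijection Tmap d.\<close>
definition phi :: "nat \<Rightarrow> 'a::field \<Rightarrow> 'a \<times> 'a \<Rightarrow> 'a \<times> 'a" where
  "phi d k yx = (let \<alpha> = the_inv (Tmap d) k; a = the_inv (Tmap d) (fst yx)
                 in (fst yx + k, snd yx + a ^ d * \<alpha> + a * \<alpha> ^ d + \<alpha> ^ (d + 1)))"

end

theory Submission
  imports Defs "HOL-Number_Theory.Residues" "HOL-Computational_Algebra.Polynomial"
begin

lemma ff_power_card:
  fixes x :: "'a :: {field,finite}"
  shows "x ^ card (UNIV :: 'a set) = x"
proof (cases "x = 0")
  case False
  have "x * (\<Prod>y\<in>UNIV-{0}. x * y) = x * x ^ (card (UNIV :: 'a set) - 1) * \<Prod>(UNIV-{0})"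
    by (simp add: prod.distrib mult_ac)
  also have "x * x ^ (card (UNIV :: 'a set) - 1) = x ^ Suc (card (UNIV :: 'a set) - 1)"
    by (subst power_Suc) auto
  also have "Suc (card (UNIV :: 'a set) - 1) = card (UNIV :: 'a set)"
    using finite_UNIV_card_ge_0[where ?'a = 'a] by simp
  also have "(\<Prod>y\<in>UNIV-{0}. x * y) = (\<Prod>y\<in>UNIV-{0}. y)"
    by (rule prod.reindex_bij_witness[of _ "\<lambda>y. y / x" "\<lambda>y. x * y"]) (use False in auto)
  finally show ?thesis
    by simp
qed (use finite_UNIV_card_ge_0[where ?'a = 'a] in auto)

lemma ff_char:
  fixes p n :: nat
  assumes "prime p" "card (UNIV :: 'a::{field,finite} set) = p ^ n"
  shows "CHAR('a) = p"
proof -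
  have "CHAR('a) > 0" by (rule finite_imp_CHAR_pos) simp
  hence pr: "prime CHAR('a)" by (rule prime_CHAR_semidom)
  have "CHAR('a) dvd p ^ n" using CHAR_dvd_CARD[where 'a='a] assms(2) by simp
  hence "CHAR('a) dvd p" using pr prime_dvd_power by blast
  thus ?thesis using pr assms(1) primes_dvd_imp_eq by blast
qed

lemma frob_add:
  fixes x y :: "'a::{field,finite}"
  assumes "CHAR('a) = p" "prime p"
  shows "(x + y) ^ (p ^ k) = x ^ (p ^ k) + y ^ (p ^ k)"
  using assms by (intro freshmans_dream') auto

lemma frob_diff:
  fixes x y :: "'a::{field,finite}"
  assumes "CHAR('a) = p" "prime p"
  shows "(x - y) ^ (p ^ k) = x ^ (p ^ k) - y ^ (p ^ k)"
proof -
  have "x ^ (p ^ k) = ((x - y) + y) ^ (p ^ k)" by simp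
  also have "\<dots> = (x - y) ^ (p ^ k) + y ^ (p ^ k)" by (rule frob_add[OF assms])
  finally show ?thesis by simp
qed

lemma frob_neg:
  fixes x :: "'a::{field,finite}"
  assumes "CHAR('a) = p" "prime p"
  shows "(- x) ^ (p ^ k) = - (x ^ (p ^ k))"
proof -
  have "p ^ k > 0" using assms(2) prime_gt_0_nat by simp
  hence "(0 - x) ^ (p ^ k) = 0 - x ^ (p ^ k)"
    using frob_diff[OF assms, of 0 x k] by (simp add: power_0_left)
  thus ?thesis by simp
qed


lemma tmap_inj:
  fixes d p s m :: nat
  assumes ch: "CHAR('a::{field,finite}) = p" and pr: "prime p" and op: "odd p" and dd: "d = p ^ s"
    and cd: "card (UNIV :: 'a set) = d ^ m" and om: "odd m"
  shows "inj (Tmap d :: 'a \<Rightarrow> 'a)"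
proof (rule injI)
  fix x y :: 'a assume "Tmap d x = Tmap d y"
  hence e: "x ^ d + x = y ^ d + y" by (simp add: Tmap_def)
  define z where "z = x - y"
  have "z ^ d = x ^ d - y ^ d" unfolding z_def dd by (rule frob_diff[OF ch pr])
  moreover have "x ^ d - y ^ d = - (x - y)" using e by (simp add: algebra_simps)
  ultimately have zd: "z ^ d = - z" unfolding z_def by simp
  have od: "odd d" using op dd by simp
  have J: "z ^ (d ^ j) = (-1) ^ j * z" for j
  proof (induction j)
    case 0 then show ?case by simp
  next
    case (Suc j)
    have "z ^ (d ^ Suc j) = (z ^ (d ^ j)) ^ d" by (metis power_Suc2 power_mult)
    also have "\<dots> = ((-1) ^ d) ^ j * z ^ d" by (simp add: Suc power_mult_distrib mult.commute flip: power_mult)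
    also have "\<dots> = (-1) ^ Suc j * z" using od zd by simp
    finally show ?case .
  qed
  have "z = z ^ (d ^ m)" using ff_power_card[of z] cd by simp
  also have "\<dots> = - z" using J[of m] om by simp
  finally have "2 * z = 0" by simp
  moreover have "(2::'a) \<noteq> 0"
  proof
    assume "(2::'a) = 0"
    hence "of_nat 2 = (0::'a)" by simp
    hence "p dvd 2" using of_nat_eq_0_iff_char_dvd[of 2, where 'a='a] ch by simp
    hence "p \<le> 2" by (simp add: dvd_imp_le)
    moreover have "p \<ge> 2" using pr prime_ge_2_nat by blast
    ultimately have "p = 2" by simp
    thus False using op by simp
  qed
  ultimately have "z = 0" by simp
  thus "x = y" unfolding z_def by simp
qed

lemma Fq_unique:
  fixes \<mu> a b a' b' :: "'a::field"
  assumes "\<mu> \<notin> {x. x ^ q = x}" "a ^ q = a" "b ^ q = b" "a' ^ q = a'" "b' ^ q = b'"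
    and fa: "\<And>x y::'a. (x - y) ^ q = x ^ q - y ^ q"
    and e: "a + b * \<mu> = a' + b' * \<mu>"
  shows "a = a' \<and> b = b'"
proof (cases "b = b'")
  case True then show ?thesis using e by simp
next
  case False
  hence "\<mu> = (a - a') / (b' - b)" using e by (simp add: field_simps)
  hence "\<mu> ^ q = (a ^ q - a' ^ q) / (b' ^ q - b ^ q)" by (simp add: power_divide fa)
  also have "\<dots> = \<mu>" using assms(2-5) \<open>\<mu> = _\<close> by simp
  finally show ?thesis using assms(1) by simp
qed


lemma Fq_span:
  fixes \<mu> :: "'a::{field,finite}"
  assumes mu: "\<mu> \<notin> {x. x ^ q = x}" and cd: "card (UNIV :: 'a set) = q ^ 2" and q1: "q > 1"
    and fa: "\<And>x y::'a. (x - y) ^ q = x ^ q - y ^ q"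
  shows "\<exists>a b. a ^ q = a \<and> b ^ q = b \<and> z = a + b * \<mu>"
proof -
  define F :: "'a set" where "F = {x. x ^ q = x}"
  define L :: "'a \<Rightarrow> 'a" where "L = (\<lambda>z. z ^ q - z)"
  define G :: "'a set" where "G = {x. x ^ q + x = 0}"
  have fq2: "x ^ (q * q) = x" for x :: 'a using ff_power_card[of x] cd by (simp add: power2_eq_square)
  have Ladd: "L (x - y) = L x - L y" for x y unfolding L_def by (simp add: fa)
  have LG: "range L \<subseteq> G"
  proof
    fix w assume "w \<in> range L"
    then obtain z where w: "w = L z" by auto
    have "w ^ q = (z ^ q) ^ q - z ^ q" unfolding w L_def by (simp add: fa)
    also have "(z ^ q) ^ q = z" using fq2[of z] by (simp add: power_mult)
    finally show "w \<in> G" unfolding G_def w L_def by simp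
  qed
  define P :: "'a poly" where "P = monom 1 q + [:0,1:]"
  have degP: "degree P = q" unfolding P_def
    using q1 by (subst degree_add_eq_left) (auto simp: degree_monom_eq)
  hence "P \<noteq> 0" using q1 by auto
  have "G = {x. poly P x = 0}" unfolding G_def P_def by (simp add: poly_monom)
  hence cG: "card G \<le> q" using card_poly_roots_bound[OF \<open>P \<noteq> 0\<close>] degP by simp
  hence cR: "card (range L) \<le> q" using LG card_mono[of G "range L"] by simp
  have "UNIV \<subseteq> (\<lambda>(k, w). k + inv_into UNIV L w) ` (F \<times> range L)"
  proof
    fix z :: 'a
    have "L (z - inv_into UNIV L (L z)) = 0" using Ladd[of z "inv_into UNIV L (L z)"] by (simp add: f_inv_into_f)
    hence "z - inv_into UNIV L (L z) \<in> F" unfolding F_def L_def by simp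
    hence "(z - inv_into UNIV L (L z), L z) \<in> F \<times> range L" by simp
    moreover have "z = (\<lambda>(k, w). k + inv_into UNIV L w) (z - inv_into UNIV L (L z), L z)" by simp
    ultimately show "z \<in> (\<lambda>(k, w). k + inv_into UNIV L w) ` (F \<times> range L)" by blast
  qed
  hence "card (UNIV :: 'a set) \<le> card ((\<lambda>(k, w). k + inv_into UNIV L w) ` (F \<times> range L))"
    by (intro card_mono) auto
  also have "\<dots> \<le> card (F \<times> range L)" by (rule card_image_le) simp
  also have "\<dots> = card F * card (range L)" by (rule card_cartesian_product)
  also have "\<dots> \<le> card F * q" using cR by simp
  finally have "q * q \<le> card F * q" using cd by (simp add: power2_eq_square)
  hence cF: "q \<le> card F" using q1 by simp
  define B where "B = (\<lambda>(a, b). a + b * \<mu>)"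
  have "inj_on B (F \<times> F)"
  proof (rule inj_onI)
    fix x y assume x: "x \<in> F \<times> F" and y: "y \<in> F \<times> F" and e: "B x = B y"
    obtain a b where ab: "x = (a, b)" by (cases x)
    obtain a' b' where ab': "y = (a', b')" by (cases y)
    have "a = a' \<and> b = b'"
      by (rule Fq_unique[OF mu _ _ _ _ fa]) (use x y e ab ab' in \<open>simp_all add: F_def B_def\<close>)
    thus "x = y" using ab ab' by simp
  qed
  hence "card (B ` (F \<times> F)) = card F * card F"
    by (simp add: card_image card_cartesian_product)
  also have "\<dots> \<ge> q * q" using cF by (simp add: mult_le_mono)
  finally have "card (UNIV :: 'a set) \<le> card (B ` (F \<times> F))" using cd by (simp add: power2_eq_square)
  moreover have "card (B ` (F \<times> F)) \<le> card (UNIV :: 'a set)" by (rule card_mono) auto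
  ultimately have "B ` (F \<times> F) = UNIV"
    by (intro card_subset_eq) simp_all
  hence "z \<in> B ` (F \<times> F)" by simp
  thus ?thesis unfolding B_def F_def by auto
qed

theorem lemma10:
  fixes p n s q d :: nat and \<mu> u1 u2 w1 w2 :: "'a::{field,finite}"
  assumes "prime p" and "odd p" and "n > 0" and "s > 0"
    and "s dvd 2 * n" and "odd (2 * n div s)" and "2 * n div s \<ge> 3"
    and "q = p ^ n" and "d = p ^ s"
    and "card (UNIV :: 'a set) = q ^ 2"
    and "\<mu> \<notin> subfield_q q"
    and "u1 \<in> subfield_q q" and "u2 \<in> subfield_q q" and "\<mu> ^ d = u1 + u2 * \<mu>"
    and "\<exists>v::'a. u2 = v ^ (d - 1)"
    and "w1 \<in> subfield_q q" and "w2 \<in> subfield_q q" and "\<mu> ^ (d + 1) = w1 + w2 * \<mu>"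
  defines "J \<equiv> {(Tmap d a, x1 + x2 * \<mu>) | a x1 x2.
                  a \<in> subfield_q q \<and> x1 \<in> subfield_q q \<and> x2 \<in> subfield_q q - {0}}"
  defines "K \<equiv> (\<Union>\<beta>\<in>subfield_q q. phi d (Tmap d (\<beta> * \<mu>)) ` J)"
  shows "UNIV - K =
    {(Tmap d (a + \<beta> * \<mu>), t1 + (a ^ d * \<beta> + a * \<beta> ^ d * u2 + \<beta> ^ (d + 1) * w2) * \<mu>) | a \<beta> t1.
       a \<in> subfield_q q \<and> \<beta> \<in> subfield_q q \<and> t1 \<in> subfield_q q}"
proof -
  note pr = assms(1) and op = assms(2)
  have p2: "p \<ge> 2" using pr prime_ge_2_nat by blast
  have cq: "card (UNIV :: 'a set) = p ^ (2 * n)" using assms(8,10) by (simp add: power_mult mult.commute)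
  have ch: "CHAR('a) = p" by (rule ff_char[OF pr cq])
  define m where "m = 2 * n div s"
  have sm: "s * m = 2 * n" unfolding m_def using assms(5) by simp
  have cdm: "card (UNIV :: 'a set) = d ^ m" using cq assms(9) sm by (simp add: power_mult[symmetric])
  have om: "odd m" using assms(6) m_def by simp
  have inj: "inj (Tmap d :: 'a \<Rightarrow> 'a)" by (rule tmap_inj[OF ch pr op assms(9) cdm om])
  have surj: "surj (Tmap d :: 'a \<Rightarrow> 'a)" using inj finite_UNIV_inj_surj[of "Tmap d :: 'a \<Rightarrow> 'a"] by simp
  have fa: "(x - y) ^ q = x ^ q - y ^ q" for x y :: 'a unfolding assms(8) by (rule frob_diff[OF ch pr])
  have fadd: "(x + y) ^ q = x ^ q + y ^ q" for x y :: 'a unfolding assms(8) by (rule frob_add[OF ch pr])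
  have q1: "q > 1" using p2 assms(3,8) by (metis less_le_trans one_less_numeral_iff one_less_power semiring_norm(76))
  have Tadd: "Tmap d (x + y) = Tmap d x + Tmap d y" for x y :: 'a
    unfolding Tmap_def assms(9) frob_add[OF ch pr] by (simp add: algebra_simps)
  define F :: "'a set" where "F = subfield_q q"
  have Fadd: "x \<in> F \<Longrightarrow> y \<in> F \<Longrightarrow> x + y \<in> F" for x y unfolding F_def subfield_q_def by (simp add: fadd)
  have Fsub: "x \<in> F \<Longrightarrow> y \<in> F \<Longrightarrow> x - y \<in> F" for x y unfolding F_def subfield_q_def by (simp add: fa)
  have Fmul: "x \<in> F \<Longrightarrow> y \<in> F \<Longrightarrow> x * y \<in> F" for x y unfolding F_def subfield_q_def by (simp add: power_mult_distrib)
  have Fpow: "x \<in> F \<Longrightarrow> x ^ k \<in> F" for x k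
  proof -
    assume "x \<in> F"
    hence xq: "x ^ q = x" unfolding F_def subfield_q_def by simp
    have "(x ^ k) ^ q = (x ^ q) ^ k" by (simp only: power_mult[symmetric] mult.commute)
    thus ?thesis unfolding F_def subfield_q_def using xq by simp
  qed
  have uniq: "a \<in> F \<Longrightarrow> b \<in> F \<Longrightarrow> a' \<in> F \<Longrightarrow> b' \<in> F \<Longrightarrow> a + b * \<mu> = a' + b' * \<mu> \<Longrightarrow> a = a' \<and> b = b'"
    for a b a' b' using Fq_unique[of \<mu> q a b a' b', OF _ _ _ _ _ fa] assms(11) unfolding F_def subfield_q_def by auto
  have span: "\<exists>a b. a \<in> F \<and> b \<in> F \<and> z = a + b * \<mu>" for z
    using Fq_span[of \<mu> q z, OF _ _ q1 fa] assms(10,11) unfolding F_def subfield_q_def by auto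
  define c where "c = (\<lambda>a \<beta>. a ^ d * \<beta> + a * \<beta> ^ d * u2 + \<beta> ^ (d + 1) * w2)"
  define c0 where "c0 = (\<lambda>a \<beta>. a * \<beta> ^ d * u1 + \<beta> ^ (d + 1) * w1)"
  have u1F: "u1 \<in> F" and u2F: "u2 \<in> F" and w1F: "w1 \<in> F" and w2F: "w2 \<in> F"
    using assms(12,13,16,17) unfolding F_def by auto
  have cF: "a \<in> F \<Longrightarrow> \<beta> \<in> F \<Longrightarrow> c a \<beta> \<in> F" for a \<beta>
    unfolding c_def by (intro Fadd Fmul Fpow u2F w2F)
  have c0F: "a \<in> F \<Longrightarrow> \<beta> \<in> F \<Longrightarrow> c0 a \<beta> \<in> F" for a \<beta>
    unfolding c0_def by (intro Fadd Fmul Fpow u1F w1F)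
  have phiF: "phi d (Tmap d (\<beta> * \<mu>)) (Tmap d a, x) = (Tmap d (a + \<beta> * \<mu>), x + c0 a \<beta> + c a \<beta> * \<mu>)"
    for a \<beta> x
  proof -
    have e1: "(\<beta> * \<mu>) ^ d = \<beta> ^ d * u1 + \<beta> ^ d * u2 * \<mu>"
      unfolding power_mult_distrib assms(14) by (simp add: algebra_simps)
    have e2: "(\<beta> * \<mu>) ^ (d + 1) = \<beta> ^ (d + 1) * w1 + \<beta> ^ (d + 1) * w2 * \<mu>"
      unfolding power_mult_distrib assms(18) by (simp add: algebra_simps)
    have "x + a ^ d * (\<beta> * \<mu>) + a * (\<beta> * \<mu>) ^ d + (\<beta> * \<mu>) ^ (d + 1) = x + c0 a \<beta> + c a \<beta> * \<mu>"
      unfolding e1 e2 c_def c0_def by (simp add: algebra_simps)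
    thus ?thesis unfolding phi_def Let_def using inj by (simp add: the_inv_f_f Tadd)
  qed
  have "UNIV - K = {(Tmap d (a + \<beta> * \<mu>), t1 + c a \<beta> * \<mu>) | a \<beta> t1. a \<in> F \<and> \<beta> \<in> F \<and> t1 \<in> F}"
  proof (intro Set.set_eqI iffI)
    fix yx :: "'a \<times> 'a" assume yxK: "yx \<in> UNIV - K"
    obtain y x where yx: "yx = (y, x)" by (cases yx)
    obtain z where yz: "y = Tmap d z" using surj by (metis surjD)
    obtain a \<beta> where aF: "a \<in> F" and bF: "\<beta> \<in> F" and za: "z = a + \<beta> * \<mu>" using span by blast
    obtain t1 t2 where t1F: "t1 \<in> F" and t2F: "t2 \<in> F" and xt: "x = t1 + t2 * \<mu>" using span by blast
    have "t2 = c a \<beta>"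
    proof (rule ccontr)
      assume ne: "t2 \<noteq> c a \<beta>"
      define j where "j = (Tmap d a, (t1 - c0 a \<beta>) + (t2 - c a \<beta>) * \<mu>)"
      have "j \<in> J"
      proof -
        have "t2 - c a \<beta> \<noteq> 0" using ne by simp
        thus ?thesis unfolding J_def j_def F_def[symmetric] using aF Fsub[OF t1F c0F[OF aF bF]] Fsub[OF t2F cF[OF aF bF]] by blast
      qed
      moreover have "phi d (Tmap d (\<beta> * \<mu>)) j = (y, x)"
        unfolding j_def phiF yz za xt by (simp add: algebra_simps)
      ultimately have "(y, x) \<in> phi d (Tmap d (\<beta> * \<mu>)) ` J" by (metis image_eqI)
      hence "(y, x) \<in> K" unfolding K_def F_def[symmetric] using bF by (rule UN_I[rotated])
      thus False using yxK yx by simp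
    qed
    hence "yx = (Tmap d (a + \<beta> * \<mu>), t1 + c a \<beta> * \<mu>)" using yx yz za xt by simp
    thus "yx \<in> {(Tmap d (a + \<beta> * \<mu>), t1 + c a \<beta> * \<mu>) | a \<beta> t1. a \<in> F \<and> \<beta> \<in> F \<and> t1 \<in> F}"
      using aF bF t1F by blast
  next
    fix yx :: "'a \<times> 'a"
    assume "yx \<in> {(Tmap d (a + \<beta> * \<mu>), t1 + c a \<beta> * \<mu>) | a \<beta> t1. a \<in> F \<and> \<beta> \<in> F \<and> t1 \<in> F}"
    then obtain a \<beta> t1 where aF: "a \<in> F" and bF: "\<beta> \<in> F" and t1F: "t1 \<in> F"
      and yx: "yx = (Tmap d (a + \<beta> * \<mu>), t1 + c a \<beta> * \<mu>)" by blast
    have "yx \<notin> K"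
    proof
      assume "yx \<in> K"
      then obtain \<beta>' j where bF': "\<beta>' \<in> F" and jJ: "j \<in> J" and yj: "yx = phi d (Tmap d (\<beta>' * \<mu>)) j"
        unfolding K_def F_def[symmetric] by blast
      from jJ obtain a' x1 x2 where aF': "a' \<in> F" and x1F: "x1 \<in> F" and x2F: "x2 \<in> F" and x20: "x2 \<noteq> 0"
        and j: "j = (Tmap d a', x1 + x2 * \<mu>)" unfolding J_def F_def[symmetric] by blast
      have e: "Tmap d (a + \<beta> * \<mu>) = Tmap d (a' + \<beta>' * \<mu>)"
        and e2: "t1 + c a \<beta> * \<mu> = x1 + x2 * \<mu> + c0 a' \<beta>' + c a' \<beta>' * \<mu>"
        using yx yj j phiF by auto
      have "a + \<beta> * \<mu> = a' + \<beta>' * \<mu>" using e inj by (simp add: inj_eq)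
      hence "a = a' \<and> \<beta> = \<beta>'" using uniq aF bF aF' bF' by blast
      hence "t1 + c a \<beta> * \<mu> = (x1 + c0 a \<beta>) + (x2 + c a \<beta>) * \<mu>" using e2 by (simp add: algebra_simps)
      hence "t1 = x1 + c0 a \<beta> \<and> c a \<beta> = x2 + c a \<beta>"
        using uniq[OF t1F cF[OF aF bF] Fadd[OF x1F c0F[OF aF bF]] Fadd[OF x2F cF[OF aF bF]]] by blast
      thus False using x20 by simp
    qed
    thus "yx \<in> UNIV - K" by simp
  qed
  thus ?thesis unfolding c_def F_def by simp
qed

end
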